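(* In the setting of the context, assume that $E_\varepsilon\to+\infty$ as $\varepsilon\to0^+$ and that there exists $\beta<2$ with $E_\varepsilon=O(\varepsilon^{-\beta})$ as $\varepsilon\to0^+$. Then the maximal solution $\varepsilon(t)$ of $\varepsilon'(t)=\varepsilon_0'\sqrt{\dfrac{m_s+m_f(\varepsilon^* )}{m_s+m_f(\varepsilon(t))}}$, $\varepsilon(0)=\varepsilon^*$, reaches $0$ in finite time with null velocity: there is $T<\infty$ with $\varepsilon(t)>0$ on $[0,T)$, $\varepsilon(t)\to0$ and $\varepsilon'(t)\to0$ as $t\to T^-$.
   Context: Notation: $e_2=(0,1)$. Geometry: $\mathsf C\subset\mathbb R^2$ is a smooth bounded connected open set, symmetric with respect to $\{\xi_1=0\}$, with $0\in\partial\mathsf C$, such that near the origin $\partial\mathsf C$ is a segment of $\{\xi_2=0\}$ with $\mathsf C$ locally above it. $S_0$ is compact, connected, symmetric with respect to $\{\xi_1=0\}$, and $\varepsilon^*>0$ is such that $S_\varepsilon:=S_0+\varepsilon e_2\subset\mathsf C$ for $0<\varepsilon\le\varepsilon^*$. For $0<\varepsilon\le\varepsilon^*$, $\varphi(\varepsilon,\cdot)\in H^1(\mathsf C\setminus S_\varepsilon)$ solves $\Delta\varphi=0$ in $\mathsf C\setminus S_\varepsilon$, $\partial_n\varphi=n_2$ on $\partial S_\varepsilon$, $\partial_n\varphi=0$ on $\partial\mathsf C$ ($n=(n_1,n_2)$ the unit normal pointing out of the fluid domain). The Dirichlet energy is $E_\varepsilon=\int_{\mathsf C\setminus S_\varepsilon}|\nabla\varphi(\varepsilon,\cdot)|^2$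 and the added mass is $m_f(\varepsilon)=\varrho_f E_\varepsilon$ with $\varrho_f>0$; $m_s>0$ and $\varepsilon_0'<0$ are given constants. *)

theory Defs
  imports "HOL-Analysis.Analysis" "HOL-Library.Landau_Symbols"
begin

definition added_mass :: "real \<Rightarrow> (real \<Rightarrow> real) \<Rightarrow> real \<Rightarrow> real" where
  "added_mass rho_f E eps = rho_f * E eps"

definition ode_rhs ::
  "real \<Rightarrow> real \<Rightarrow> (real \<Rightarrow> real) \<Rightarrow> real \<Rightarrow> real \<Rightarrow> real \<Rightarrow> real" where
  "ode_rhs m_s rho_f E eps0' eps_star x =
     eps0' * sqrt ((m_s + added_mass rho_f E eps_star) / (m_s + added_mass rho_f E x))"

text \<open>A solution of the Cauchy problem eps(0) = eps_star on the time interval [0,T)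
  (T may be infinite), with values in the state space (0, eps_star] on which
  E (hence the vector field) is defined.\<close>
definition is_solution ::
  "real \<Rightarrow> real \<Rightarrow> (real \<Rightarrow> real) \<Rightarrow> real \<Rightarrow> real \<Rightarrow> ereal \<Rightarrow> (real \<Rightarrow> real) \<Rightarrow> bool" where
  "is_solution m_s rho_f E eps0' eps_star T eps \<longleftrightarrow>
     0 < T \<and> eps 0 = eps_star \<and>
     (\<forall>t. 0 \<le> t \<and> ereal t < T \<longrightarrow>
        0 < eps t \<and> eps t \<le> eps_star \<and>
        (eps has_real_derivative ode_rhs m_s rho_f E eps0' eps_star (eps t))
          (at t within {s. 0 \<le> s \<and> ereal s < T}))"

definition is_maximal_solution ::
  "real \<Rightarrow> real \<Rightarrow> (real \<Rightarrow> real) \<Rightarrow> real \<Rightarrow> real \<Rightarrow> ereal \<Rightarrow> (real \<Rightarrow> real) \<Rightarrow> bool" where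
  "is_maximal_solution m_s rho_f E eps0' eps_star T eps \<longleftrightarrow>
     is_solution m_s rho_f E eps0' eps_star T eps \<and>
     (\<forall>T' eps'. is_solution m_s rho_f E eps0' eps_star T' eps' \<and> T \<le> T' \<and>
        (\<forall>t. 0 \<le> t \<and> ereal t < T \<longrightarrow> eps' t = eps t) \<longrightarrow> T' = T)"

end

theory Submission
  imports Defs "HOL-Complex_Analysis.Complex_Analysis"
begin

theorem lemma1p3:
  fixes E :: "real \<Rightarrow> real"
    and m_s rho_f eps0' eps_star :: real
  assumes eps_star_pos: "0 < eps_star"
    and m_s_pos: "0 < m_s"
    and rho_f_pos: "0 < rho_f"
    and eps0'_neg: "eps0' < 0"
    and E_nonneg: "\<forall>x\<in>{0<..eps_star}. 0 \<le> E x"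
    and E_cont: "continuous_on {0<..eps_star} E"
    and E_blowup: "filterlim E at_top (at_right 0)"
    and E_bound: "\<exists>\<beta><2. E \<in> O[at_right 0](\<lambda>x. x powr (- \<beta>))"
  shows "(\<exists>T eps. is_maximal_solution m_s rho_f E eps0' eps_star T eps) \<and>
         (\<forall>T eps. is_maximal_solution m_s rho_f E eps0' eps_star T eps \<longrightarrow>
            T < \<infinity> \<and>
            (eps \<longlongrightarrow> 0) (at_left (real_of_ereal T)) \<and>
            ((\<lambda>t. deriv eps t) \<longlongrightarrow> 0) (at_left (real_of_ereal T)))"
proof -
  define c where "c = m_s + rho_f * E eps_star"
  have c_pos: "c > 0" using E_nonneg eps_star_pos m_s_pos rho_f_pos unfolding c_def
    by (simp add: add_pos_nonneg)
  define f where "f = ode_rhs m_s rho_f E eps0' eps_star"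
  have f_eq: "f x = eps0' * sqrt (c / (m_s + rho_f * E x))" for x
    unfolding f_def ode_rhs_def added_mass_def c_def by simp
  define gt where "gt x = sqrt ((m_s + rho_f * E (min x eps_star)) / c) / (- eps0')" for x
  define B where "B = eps_star + 1"
  define F where "F y = integral {y..B} gt - integral {eps_star..B} gt" for y
  have mpos: "m_s + rho_f * E (min x eps_star) > 0" if "x > 0" for x
    using E_nonneg that eps_star_pos m_s_pos rho_f_pos by (simp add: add_pos_nonneg)
  have gt_pos: "gt x > 0" if "x > 0" for x
    unfolding gt_def using mpos[OF that] c_pos eps0'_neg
    by (intro divide_pos_pos real_sqrt_gt_zero) auto
  have gt_cont: "continuous_on {0<..} gt"
  proof -
    have "continuous_on {0<..} (E \<circ> (\<lambda>x. min x eps_star))"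
      by (rule continuous_on_compose[OF continuous_on_min[OF continuous_on_id continuous_on_const]])
        (rule continuous_on_subset[OF E_cont], use eps_star_pos in auto)
    then show ?thesis unfolding gt_def o_def
      using c_pos eps0'_neg by (intro continuous_intros) auto
  qed
  have F_deriv: "(F has_real_derivative - gt x) (at x)" if "0 < x" "x < B" for x
  proof -
    have cc: "continuous_on {x/2..B} gt"
      by (rule continuous_on_subset[OF gt_cont]) (use that in auto)
    have "((\<lambda>y. integral {y..B} gt) has_real_derivative - gt x) (at x within {x/2..B})"
      by (rule integral_has_real_derivative'[OF cc]) (use that in auto)
    moreover have "at x within {x/2..B} = at x"
      by (rule at_within_interior) (use that in simp)
    ultimately have "((\<lambda>y. integral {y..B} gt) has_real_derivative - gt x) (at x)"
      by metis
    then have "((\<lambda>y. integral {y..B} gt - integral {eps_star..B} gt) has_real_derivative - gt x - 0) (at x)"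
      by (intro DERIV_diff DERIV_const)
    then show ?thesis unfolding F_def by simp
  qed
  have F_dec: "F y < F x" if "0 < x" "x < y" "y < B" for x y
  proof (rule DERIV_neg_imp_decreasing[OF that(2)])
    fix z assume "x \<le> z" "z \<le> y"
    then have z: "0 < z" "z < B" using that by auto
    show "\<exists>d. DERIV F z :> d \<and> d < 0"
      by (rule exI[of _ "- gt z"]) (use F_deriv[OF z] gt_pos[OF z(1)] in simp)
  qed
  have F_le: "F y \<le> F x" if "0 < x" "x \<le> y" "y < B" for x y
    using F_dec[of x y] that by (cases "x = y") auto
  have F_es: "F eps_star = 0" unfolding F_def by simp
  have es_B: "eps_star < B" unfolding B_def by simp
  have F_bound: "\<exists>M. \<forall>x\<in>{0<..eps_star}. F x \<le> M"
  proof -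
    obtain \<beta> where \<beta>: "\<beta> < 2" "E \<in> O[at_right 0](\<lambda>x. x powr (- \<beta>))"
      using E_bound by blast
    obtain C where C: "C > 0" "eventually (\<lambda>x. norm (E x) \<le> C * norm (x powr (- \<beta>))) (at_right 0)"
      using landau_o.bigE[OF \<beta>(2)] by blast
    obtain d where d: "d > 0" "\<And>y. y > 0 \<Longrightarrow> y < d \<Longrightarrow> norm (E y) \<le> C * norm (y powr (- \<beta>))"
      using C(2) unfolding eventually_at_right_field by auto
    define \<gamma> where "\<gamma> = max \<beta> 1"
    define a where "a = 1 - \<gamma>/2"
    have a_pos: "a > 0" unfolding a_def \<gamma>_def using \<beta>(1) by auto
    have ga1: "a - 1 = - \<gamma>/2" unfolding a_def by simp
    define \<delta> where "\<delta> = min (d/2) (min 1 eps_star)"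
    have \<delta>: "0 < \<delta>" "\<delta> < d" "\<delta> \<le> 1" "\<delta> \<le> eps_star"
      unfolding \<delta>_def using d(1) eps_star_pos by auto
    define K where "K = sqrt ((m_s + rho_f * C) / c) / (- eps0')"
    have K_pos: "K > 0" unfolding K_def using m_s_pos rho_f_pos C(1) c_pos eps0'_neg
      by (intro divide_pos_pos real_sqrt_gt_zero) (auto simp: add_pos_pos)
    have gt_le: "gt y \<le> K * y powr (- \<gamma>/2)" if y: "0 < y" "y \<le> \<delta>" for y
    proof -
      have y1: "y \<le> 1" and yes: "y \<le> eps_star" and yd: "y < d" using y \<delta> by auto
      have "E y \<le> C * y powr (- \<beta>)" using d(2)[of y] y yd by simp
      also have "\<dots> \<le> C * y powr (- \<gamma>)"
        using C(1) y y1 by (intro mult_left_mono powr_mono') (auto simp: \<gamma>_def)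
      finally have E1: "E y \<le> C * y powr (- \<gamma>)" .
      have P1: "1 \<le> y powr (- \<gamma>)"
        using powr_mono'[of "- \<gamma>" 0 y] y y1 by (simp add: \<gamma>_def)
      have "m_s + rho_f * E y \<le> m_s * y powr (- \<gamma>) + rho_f * (C * y powr (- \<gamma>))"
        using E1 P1 m_s_pos rho_f_pos by (intro add_mono mult_left_mono) auto
      also have "\<dots> = (m_s + rho_f * C) * y powr (- \<gamma>)" by (simp add: algebra_simps)
      finally have m1: "m_s + rho_f * E y \<le> (m_s + rho_f * C) * y powr (- \<gamma>)" .
      have "gt y = sqrt ((m_s + rho_f * E y) / c) / (- eps0')"
        unfolding gt_def using yes by simp
      also have "\<dots> \<le> sqrt ((m_s + rho_f * C) * y powr (- \<gamma>) / c) / (- eps0')"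
        using m1 c_pos eps0'_neg by (intro divide_right_mono real_sqrt_le_mono) auto
      also have "\<dots> = K * sqrt (y powr (- \<gamma>))"
      proof -
        have "(m_s + rho_f * C) * y powr (- \<gamma>) / c = ((m_s + rho_f * C) / c) * y powr (- \<gamma>)"
          by simp
        then show ?thesis unfolding K_def by (simp only: real_sqrt_mult) simp
      qed
      also have "sqrt (y powr (- \<gamma>)) = y powr (- \<gamma>/2)"
        using powr_half_sqrt_powr[of y "- \<gamma>"] y by simp
      finally show ?thesis .
    qed
    define P where "P y = K / a * y powr a" for y
    have P_nonneg: "P y \<ge> 0" for y unfolding P_def using K_pos a_pos by simp
    have Phi: "F x + P x \<le> F \<delta> + P \<delta>" if x: "0 < x" "x \<le> \<delta>" for x
    proof (rule DERIV_nonneg_imp_nondecreasing[OF x(2)])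
      fix y assume y: "x \<le> y" "y \<le> \<delta>"
      have yB: "y < B" using y \<delta> es_B by auto
      have "((\<lambda>y. F y + P y) has_real_derivative - gt y + K / a * (a * y powr (a - 1))) (at y)"
        unfolding P_def using x y yB
        by (intro DERIV_add F_deriv DERIV_cmult has_real_derivative_powr) auto
      moreover have "- gt y + K / a * (a * y powr (a - 1)) \<ge> 0"
        using gt_le[of y] x y a_pos ga1 by simp
      ultimately show "\<exists>D. ((\<lambda>y. F y + P y) has_real_derivative D) (at y) \<and> D \<ge> 0" by blast
    qed
    have "F x \<le> F \<delta> + P \<delta>" if x: "x \<in> {0<..eps_star}" for x
    proof (cases "x \<le> \<delta>")
      case True
      then show ?thesis using Phi[of x] P_nonneg[of x] x by auto
    next
      case False
      then have "F x \<le> F \<delta>" using F_le[of \<delta> x] x \<delta> es_B by auto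
      then show ?thesis using P_nonneg[of \<delta>] by simp
    qed
    then show ?thesis by blast
  qed
  then obtain M where M: "\<And>x. x \<in> {0<..eps_star} \<Longrightarrow> F x \<le> M" by blast
  define L where "L = Sup (F ` {0<..eps_star})"
  have bdd: "bdd_above (F ` {0<..eps_star})" by (rule bdd_aboveI[of _ M]) (use M in auto)
  have F_le_L: "F x \<le> L" if "x \<in> {0<..eps_star}" for x
    unfolding L_def by (rule cSup_upper) (use that bdd in auto)
  have F_lt_L: "F x < L" if x: "x \<in> {0<..eps_star}" for x
  proof -
    have "F x < F (x/2)" using x es_B by (intro F_dec) auto
    also have "\<dots> \<le> L" using x by (intro F_le_L) auto
    finally show ?thesis .
  qed
  have L_pos: "0 < L" using F_lt_L[of eps_star] F_es eps_star_pos by simp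
  have F_cont: "continuous_on {0<..<B} F"
  proof (rule continuous_at_imp_continuous_on, rule ballI)
    fix x assume "x \<in> {0<..<B}"
    then show "isCont F x" using F_deriv[of x] DERIV_isCont by auto
  qed
  have key: "- gt x * f x = 1" if x: "x \<in> {0<..eps_star}" for x
  proof -
    have m: "m_s + rho_f * E x > 0" using mpos[of x] x by (simp add: min_absorb1)
    have "- gt x * f x = sqrt ((m_s + rho_f * E x) / c) * sqrt (c / (m_s + rho_f * E x))"
      unfolding gt_def f_eq using x eps0'_neg by (simp add: min_absorb1)
    also have "\<dots> = sqrt ((m_s + rho_f * E x) / c * (c / (m_s + rho_f * E x)))"
      by (simp only: real_sqrt_mult)
    also have "(m_s + rho_f * E x) / c * (c / (m_s + rho_f * E x)) = 1"
      using m c_pos by simp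
    finally show ?thesis by simp
  qed
  have range: "\<exists>x\<in>{0<..eps_star}. F x = t" if t: "0 \<le> t" "t < L" for t
  proof -
    obtain y where y: "y \<in> F ` {0<..eps_star}" "t < y"
      using less_cSupE[of t "F ` {0<..eps_star}"] t eps_star_pos unfolding L_def by auto
    then obtain x0 where x0: "x0 \<in> {0<..eps_star}" "t < F x0" by auto
    have "continuous_on {x0..eps_star} F"
      by (rule continuous_on_subset[OF F_cont]) (use x0 es_B in auto)
    then obtain x where "x \<ge> x0" "x \<le> eps_star" "F x = t"
      using IVT2'[of F eps_star t x0] F_es t x0 by auto
    then show ?thesis using x0 by auto
  qed
  have sol: "(\<forall>t. 0 \<le> t \<and> ereal t < T \<longrightarrow> F (ep t) = t) \<and> T \<le> ereal L"
    if sol0: "is_solution m_s rho_f E eps0' eps_star T ep" for T ep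
  proof -
    define S where "S = {s. 0 \<le> s \<and> ereal s < T}"
    have solS: "0 < T" "ep 0 = eps_star"
      "\<And>t. t \<in> S \<Longrightarrow> ep t \<in> {0<..eps_star} \<and> (ep has_real_derivative f (ep t)) (at t within S)"
      using sol0 unfolding is_solution_def S_def f_def by auto
    have cS: "convex S" unfolding is_interval_convex_1[symmetric] is_interval_1 S_def
      by (auto intro: le_less_trans[of _ "ereal _" T])
    have "\<exists>k. \<forall>t\<in>S. F (ep t) - t = k"
    proof (rule has_field_derivative_zero_constant[OF cS])
      fix t assume t: "t \<in> S"
      have e: "ep t \<in> {0<..eps_star}" and d: "(ep has_real_derivative f (ep t)) (at t within S)"
        using solS(3)[OF t] by auto
      have "DERIV F (ep t) :> - gt (ep t)" using e es_B by (intro F_deriv) auto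
      from DERIV_chain2[OF this d]
      have "((\<lambda>s. F (ep s) - s) has_real_derivative - gt (ep t) * f (ep t) - 1) (at t within S)"
        by (intro DERIV_diff) (auto intro!: derivative_eq_intros)
      then show "((\<lambda>s. F (ep s) - s) has_real_derivative 0) (at t within S)"
        using key[OF e] by simp
    qed
    then obtain k where k: "\<And>t. t \<in> S \<Longrightarrow> F (ep t) - t = k" by blast
    have "0 \<in> S" using solS(1) unfolding S_def by (simp add: zero_ereal_def)
    then have k0: "k = 0" using k[of 0] solS(2) F_es by simp
    have Fe: "F (ep t) = t" if "t \<in> S" for t using k[OF that] k0 by simp
    have "T \<le> ereal L"
    proof (rule ccontr)
      assume "\<not> T \<le> ereal L"
      then have "L \<in> S" unfolding S_def using L_pos by auto
      then show False using Fe[of L] F_lt_L[of "ep L"] solS(3)[of L] by auto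
    qed
    then show ?thesis using Fe unfolding S_def by auto
  qed
  define H where "H = inv_into {0<..<B} F"
  have inj: "inj_on F {0<..<B}"
  proof (rule inj_onI)
    fix x y assume "x \<in> {0<..<B}" "y \<in> {0<..<B}" "F x = F y"
    then show "x = y" using F_dec[of x y] F_dec[of y x]
      by (cases x y rule: linorder_cases) auto
  qed
  have HF: "H (F z) = z" if "z \<in> {0<..<B}" for z
    unfolding H_def using inj that by (rule inv_into_f_f)
  have H_sol: "is_solution m_s rho_f E eps0' eps_star (ereal L) H"
    unfolding is_solution_def
  proof (intro conjI allI impI)
    show "0 < ereal L" using L_pos by simp
    show "H 0 = eps_star" using HF[of eps_star] F_es es_B eps_star_pos by simp
    fix t assume t: "0 \<le> t \<and> ereal t < ereal L"
    then obtain x where x: "x \<in> {0<..eps_star}" "F x = t" using range[of t] by auto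
    have xB: "x \<in> {0<..<B}" using x es_B by auto
    have Ht: "H t = x" using HF[OF xB] x by simp
    show "0 < H t" "H t \<le> eps_star" using Ht x by auto
    have "DERIV H (F x) :> inverse (- gt x)"
      by (rule has_field_derivative_inverse_strong[OF F_deriv _ _ xB F_cont HF])
        (use xB gt_pos[of x] in auto)
    moreover have "inverse (- gt x) = ode_rhs m_s rho_f E eps0' eps_star (H t)"
      using key[OF x(1)] Ht gt_pos[of x] x unfolding f_def by (auto simp: field_simps)
    ultimately show "(H has_real_derivative ode_rhs m_s rho_f E eps0' eps_star (H t))
        (at t within {s. 0 \<le> s \<and> ereal s < ereal L})"
      using x by (auto intro: has_field_derivative_at_within)
  qed
  have H_max: "is_maximal_solution m_s rho_f E eps0' eps_star (ereal L) H"
    unfolding is_maximal_solution_def using H_sol sol by (auto intro: order.antisym)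
  show ?thesis
  proof (intro conjI allI impI)
    show "\<exists>T eps. is_maximal_solution m_s rho_f E eps0' eps_star T eps" using H_max by blast
    fix T ep assume mx: "is_maximal_solution m_s rho_f E eps0' eps_star T ep"
    then have sT: "is_solution m_s rho_f E eps0' eps_star T ep" unfolding is_maximal_solution_def by simp
    have Fe: "F (ep t) = t" and TL: "T \<le> ereal L" if "0 \<le> t" "ereal t < T" for t
      using sol[OF sT] that by auto
    have solT: "0 < ep t \<and> ep t \<le> eps_star \<and>
        (ep has_real_derivative f (ep t)) (at t within {s. 0 \<le> s \<and> ereal s < T})"
      if "0 \<le> t" "ereal t < T" for t
      using sT that unfolding is_solution_def f_def by auto
    have TL': "T \<le> ereal L" using sol[OF sT] by auto
    have agree: "H t = ep t" if "0 \<le> t" "ereal t < T" for t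
      using HF[of "ep t"] Fe[OF that] solT[OF that] es_B by auto
    have TeqL: "T = ereal L"
      using mx H_sol TL' agree unfolding is_maximal_solution_def by (metis (no_types, lifting))
    then show "T < \<infinity>" by simp
    have rT: "real_of_ereal T = L" using TeqL by simp
    have ev_in: "eventually (\<lambda>t. 0 < t \<and> t < L) (at_left L)"
      unfolding eventually_at_left_field using L_pos by (intro exI[of _ 0]) auto
    have lim0: "(ep \<longlongrightarrow> 0) (at_left L)"
    proof (rule order_tendstoI)
      fix e :: real assume e: "e < 0"
      show "eventually (\<lambda>t. e < ep t) (at_left L)"
        using ev_in
      proof eventually_elim
        case (elim t)
        then have "0 \<le> t" "ereal t < T" using TeqL by auto
        then show ?case using solT[of t] e by auto
      qed
    next
      fix e :: real assume e: "0 < e"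
      define e' where "e' = min e eps_star"
      have e': "e' \<in> {0<..eps_star}" "e' \<le> e" unfolding e'_def using e eps_star_pos by auto
      have "F e' < L" using F_lt_L[OF e'(1)] .
      moreover have "F e' \<ge> 0" using F_le[of e' eps_star] F_es e' es_B by auto
      ultimately have "eventually (\<lambda>t. F e' < t \<and> 0 < t \<and> t < L) (at_left L)"
        using ev_in unfolding eventually_at_left_field
        by (auto intro!: exI[of _ "F e'"])
      then show "eventually (\<lambda>t. ep t < e) (at_left L)"
      proof eventually_elim
        case (elim t)
        then have t: "0 \<le> t" "ereal t < T" using TeqL by auto
        have "ep t < e'"
        proof (rule ccontr)
          assume "\<not> ep t < e'"
          then have "F (ep t) \<le> F e'" using F_le[of e' "ep t"] e' solT[OF t] es_B by auto
          then show False using Fe[OF t] elim by simp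
        qed
        then show ?case using e' by simp
      qed
    qed
    then show "(ep \<longlongrightarrow> 0) (at_left (real_of_ereal T))" using rT by simp
    have ev_d: "eventually (\<lambda>t. deriv ep t = eps0' * sqrt (c / (m_s + rho_f * E (ep t)))) (at_left L)"
      using ev_in
    proof eventually_elim
      case (elim t)
      then have t: "0 \<le> t" "ereal t < T" using TeqL by auto
      have "t \<in> interior {s. 0 \<le> s \<and> ereal s < T}"
      proof -
        have "{0<..<L} \<subseteq> {s. 0 \<le> s \<and> ereal s < T}" using TeqL by auto
        then have "{0<..<L} \<subseteq> interior {s. 0 \<le> s \<and> ereal s < T}"
          by (rule interior_maximal) simp
        then show ?thesis using elim by auto
      qed
      then have "at t within {s. 0 \<le> s \<and> ereal s < T} = at t" by (rule at_within_interior)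
      then have "DERIV ep t :> f (ep t)" using solT[OF t] by metis
      then show ?case using f_eq by (simp add: DERIV_imp_deriv)
    qed
    have "filterlim ep (at_right 0) (at_left L)"
      by (rule tendsto_imp_filterlim_at_right[OF lim0])
        (use ev_in in \<open>eventually_elim, use solT TeqL in \<open>auto simp: less_imp_le\<close>\<close>)
    then have "filterlim (\<lambda>t. E (ep t)) at_top (at_left L)"
      by (rule filterlim_compose[OF E_blowup])
    then have "filterlim (\<lambda>t. m_s + rho_f * E (ep t)) at_top (at_left L)"
      by (intro filterlim_tendsto_add_at_top[OF tendsto_const]
          filterlim_tendsto_pos_mult_at_top[OF tendsto_const rho_f_pos])
    then have "((\<lambda>t. c / (m_s + rho_f * E (ep t))) \<longlongrightarrow> 0) (at_left L)"
      by (intro tendsto_divide_0[OF tendsto_const] filterlim_at_top_imp_at_infinity)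
    then have "((\<lambda>t. eps0' * sqrt (c / (m_s + rho_f * E (ep t)))) \<longlongrightarrow> eps0' * sqrt 0) (at_left L)"
      by (intro tendsto_mult tendsto_const tendsto_real_sqrt)
    then have "((\<lambda>t. deriv ep t) \<longlongrightarrow> 0) (at_left L)"
      using ev_d by (simp add: tendsto_cong)
    then show "((\<lambda>t. deriv ep t) \<longlongrightarrow> 0) (at_left (real_of_ereal T))" using rT by simp
  qed
qed
end
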